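(* Let $G$ be a mixed signed, directed graph on vertices $\{1,\dots,n\}$ with $m$ directed edges, and let $\widetilde{G}$ be its augmented signed graph, with artificial vertices indexed $t_1,\dots,t_m$. Regard $k[\widetilde{G}]\subseteq k[x_1^{\pm1},\dots,x_n^{\pm1},t_1^{\pm1},\dots,t_m^{\pm1}]$ and $k[G]\subseteq k[x_1^{\pm1},\dots,x_n^{\pm1}]$, and let $k(\widetilde G)$, $k(G)$ be their fraction fields inside $k(x_1,\dots,x_n,t_1,\dots,t_m)$. Then $k(\widetilde{G})\cap k(x_1,\dots,x_n)=k(G)$.
   Context: $k$ is a field. A mixed signed, directed graph $G$ on vertex set $\{1,\dots,n\}$ has a set of signed edges $+ij$ or $-ij$ (loops $\pm ii$ allowed) and directed edges $(i,j)$ with $i\ne j$; between a pair of vertices any subset of $+ij,-ij,(i,j),(j,i)$ may occur. Define $\rho(\pm ij)=\pm(e_i+e_j)$ (so $\rho(\pm ii)=\pm2e_i$) and $\rho((i,j))=e_j-e_i$ in $\mathbb{R}^n$. The edge ring is $k[G]=k[x^a: a\in\rho(E(G))]$ with $x^a=\prod x_i^{a_i}$. The augmented signed graph $\widetilde G$ is the signed graph obtained by replacing each directed edge $(i,j)$ by a new (artificial) vertex $t_{(i,j)}$ and the two edges $-i\,t_{(i,j)}$ and $+t_{(i,j)}\,j$; its edge ring is defined in the same way using variables $x_1,\dots,x_n$ and $t_1,\dots,t_m$ for the artificial vertices. *)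

theory Defs
  imports "HOL-Library.Poly_Mapping"
begin

text \<open>Variables: Inl i is x_i (i in 1..n), Inr k is the artificial variable t_(k+1)
  attached to the k-th directed edge (0-based position in the list of directed edges).\<close>

type_synonym var = "nat + nat"
type_synonym expo = "var \<Rightarrow>\<^sub>0 int"
type_synonym 'k laurent = "expo \<Rightarrow>\<^sub>0 'k"

definition e :: "var \<Rightarrow> expo" where
  "e v = Poly_Mapping.single v 1"

definition monom :: "expo \<Rightarrow> 'k::field laurent" where
  "monom a = Poly_Mapping.single a 1"

text \<open>Signed edge: (True,i,j) is +ij, (False,i,j) is -ij; directed edge (i,j).\<close>
definition rho_signed :: "bool \<times> var \<times> var \<Rightarrow> expo" where
  "rho_signed s = (case s of (b, i, j) \<Rightarrow> (if b then e i + e j else - (e i + e j)))"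

definition rho_dir :: "nat \<times> nat \<Rightarrow> expo" where
  "rho_dir d = (case d of (i, j) \<Rightarrow> e (Inl j) - e (Inl i))"

inductive_set alg_gen :: "'k::field laurent set \<Rightarrow> 'k laurent set" for A where
  const: "Poly_Mapping.single 0 c \<in> alg_gen A"
| gen: "a \<in> A \<Longrightarrow> a \<in> alg_gen A"
| add: "p \<in> alg_gen A \<Longrightarrow> q \<in> alg_gen A \<Longrightarrow> p + q \<in> alg_gen A"
| mult: "p \<in> alg_gen A \<Longrightarrow> q \<in> alg_gen A \<Longrightarrow> p * q \<in> alg_gen A"

definition edge_ring :: "(bool \<times> nat \<times> nat) set \<Rightarrow> (nat \<times> nat) list \<Rightarrow> 'k::field laurent set" where
  "edge_ring S D = alg_gen ((\<lambda>(b,i,j). monom (rho_signed (b, Inl i, Inl j))) ` S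
                          \<union> (\<lambda>d. monom (rho_dir d)) ` set D)"

text \<open>Edge set of the augmented signed graph: each directed edge (i,j), at position k
  of D, is replaced by the artificial vertex t_k and edges -i t_k and +t_k j.\<close>
definition aug_edges :: "(bool \<times> nat \<times> nat) set \<Rightarrow> (nat \<times> nat) list \<Rightarrow> (bool \<times> var \<times> var) set" where
  "aug_edges S D = (\<lambda>(b,i,j). (b, Inl i, Inl j)) ` S
     \<union> {(False, Inl (fst (D ! k)), Inr k) | k. k < length D}
     \<union> {(True, Inr k, Inl (snd (D ! k))) | k. k < length D}"

definition aug_edge_ring :: "(bool \<times> nat \<times> nat) set \<Rightarrow> (nat \<times> nat) list \<Rightarrow> 'k::field laurent set" where
  "aug_edge_ring S D = alg_gen (monom ` rho_signed ` aug_edges S D)"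

definition poly_x :: "nat \<Rightarrow> 'k::field laurent set" where
  "poly_x n = alg_gen ((\<lambda>i. monom (e (Inl i))) ` {1..n})"

text \<open>Membership of the element f/g (g nonzero) of k(x_1..x_n,t_1..t_m) in the fraction
  field of a subring A, i.e. in {p/q | p q \<in> A, q \<noteq> 0}.\<close>
definition in_frac :: "'k::field laurent set \<Rightarrow> 'k laurent \<Rightarrow> 'k laurent \<Rightarrow> bool" where
  "in_frac A f g \<longleftrightarrow> (\<exists>p\<in>A. \<exists>q\<in>A. q \<noteq> 0 \<and> f * q = p * g)"

end

theory Submission imports Defs begin
instantiation sum :: (linorder, linorder) linorder
begin
definition less_eq_sum :: "'a + 'b \<Rightarrow> 'a + 'b \<Rightarrow> bool" where
 "less_eq_sum x y = (case x of Inl a \<Rightarrow> (case y of Inl b \<Rightarrow> a \<le> b | Inr _ \<Rightarrow> True)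
    | Inr a \<Rightarrow> (case y of Inl _ \<Rightarrow> False | Inr b \<Rightarrow> a \<le> b))"
definition less_sum :: "'a + 'b \<Rightarrow> 'a + 'b \<Rightarrow> bool" where
 "less_sum x y = (x \<le> y \<and> \<not> y \<le> x)"
instance by standard (auto simp: less_eq_sum_def less_sum_def split: sum.splits)
end

lemma lookup_single': "Poly_Mapping.lookup (Poly_Mapping.single k v) k' = (if k = k' then v else 0)"
  by (simp add: lookup_single)

lemma monom_mult: "monom a * monom b = (monom (a+b) :: 'k::field laurent)"
  by (simp add: monom_def mult_single)
lemma monom_0: "monom 0 = (1 :: 'k::field laurent)" by (simp add: monom_def)
lemma monom_nz: "monom a \<noteq> (0 :: 'k::field laurent)"
proof
  assume "monom a = (0 :: 'k::field laurent)"
  then have "Poly_Mapping.lookup (monom a :: 'k laurent) a = 0" by simp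
  then show False by (simp add: monom_def)
qed

lemma ag_one: "1 \<in> alg_gen A" using alg_gen.const[of 1 A] by simp
lemma ag_zero: "0 \<in> alg_gen A" using alg_gen.const[of 0 A] by simp
lemma ag_sum: "finite I \<Longrightarrow> (\<forall>i\<in>I. h i \<in> alg_gen A) \<Longrightarrow> sum h I \<in> alg_gen A"
  by (induct rule: finite_induct) (auto intro: alg_gen.add ag_zero)
lemma ag_sub: assumes "A \<subseteq> alg_gen B" "x \<in> alg_gen A" shows "x \<in> alg_gen B"
  using assms(2) by (induct rule: alg_gen.induct) (use assms(1) in \<open>auto intro: alg_gen.intros\<close>)

inductive_set mon :: "expo set \<Rightarrow> expo set" for A where
  mzero: "0 \<in> mon A" | mgen: "a \<in> A \<Longrightarrow> a \<in> mon A"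
| madd: "a \<in> mon A \<Longrightarrow> b \<in> mon A \<Longrightarrow> a + b \<in> mon A"

lemma monom_in: "a \<in> mon A \<Longrightarrow> (monom a :: 'k::field laurent) \<in> alg_gen (monom ` A)"
proof (induct rule: mon.induct)
  case mzero then show ?case by (simp add: monom_0 ag_one)
next
  case (mgen a) then show ?case by (auto intro: alg_gen.gen)
next
  case (madd a b)
  have "(monom (a+b) :: 'k laurent) = monom a * monom b" by (simp add: monom_mult)
  then show ?case using madd alg_gen.mult by simp
qed

lemma single_in: "a \<in> mon A \<Longrightarrow> (Poly_Mapping.single a c :: 'k::field laurent) \<in> alg_gen (monom ` A)"
proof -
  assume "a \<in> mon A"
  have "(Poly_Mapping.single a c :: 'k::field laurent) = Poly_Mapping.single 0 c * monom a"
    by (simp add: monom_def mult_single)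
  then show ?thesis by (simp only:) (rule alg_gen.mult[OF alg_gen.const monom_in[OF \<open>a \<in> mon A\<close>]])
qed

lemma expand: "(r::'k::field laurent) = (\<Sum>a\<in>Poly_Mapping.keys r. Poly_Mapping.single a (Poly_Mapping.lookup r a))"
proof (rule poly_mapping_eqI)
  fix k
  have "Poly_Mapping.lookup (\<Sum>a\<in>Poly_Mapping.keys r. Poly_Mapping.single a (Poly_Mapping.lookup r a)) k
     = (\<Sum>a\<in>Poly_Mapping.keys r. if a = k then Poly_Mapping.lookup r a else 0)"
    by (simp add: lookup_sum lookup_single')
  also have "\<dots> = Poly_Mapping.lookup r k"
    by (simp add: in_keys_iff)
  finally show "Poly_Mapping.lookup r k = Poly_Mapping.lookup (\<Sum>a\<in>Poly_Mapping.keys r. Poly_Mapping.single a (Poly_Mapping.lookup r a)) k" by simp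
qed

lemma keys_in: "Poly_Mapping.keys r \<subseteq> mon A \<Longrightarrow> (r::'k::field laurent) \<in> alg_gen (monom ` A)"
  by (subst expand) (auto intro!: ag_sum single_in)

lemma keys_of: "r \<in> alg_gen (monom ` A) \<Longrightarrow> Poly_Mapping.keys (r::'k::field laurent) \<subseteq> mon A"
proof (induct rule: alg_gen.induct)
  case (const c) then show ?case by (simp add: mon.mzero)
next
  case (gen a)
  then obtain b where "b \<in> A" "a = monom b" by auto
  then show ?case by (simp add: monom_def mon.mgen)
next
  case (add p q)
  have "Poly_Mapping.keys (p+q) \<subseteq> Poly_Mapping.keys p \<union> Poly_Mapping.keys q" by (rule keys_add)
  with add show ?case by blast
next
  case (mult p q)
  show ?case
  proof
    fix x assume "x \<in> Poly_Mapping.keys (p*q)"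
    then obtain a b where "x = a + b" "a \<in> Poly_Mapping.keys p" "b \<in> Poly_Mapping.keys q"
      using keys_mult[of p q] by blast
    with mult show "x \<in> mon A" by (blast intro: mon.madd)
  qed
qed


definition AG :: "(bool \<times> nat \<times> nat) set \<Rightarrow> (nat \<times> nat) list \<Rightarrow> expo set" where
  "AG S D = (\<lambda>(b,i,j). rho_signed (b, Inl i, Inl j)) ` S \<union> rho_dir ` set D"

lemma edge_ring_eq: "(edge_ring S D :: 'k::field laurent set) = alg_gen (monom ` AG S D)"
proof -
  have "((\<lambda>(b,i,j). monom (rho_signed (b, Inl i, Inl j))) ` S :: 'k laurent set)
        = monom ` (\<lambda>(b,i,j). rho_signed (b, Inl i, Inl j)) ` S"
    unfolding image_image by (rule image_cong) (auto split: prod.splits)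
  moreover have "((\<lambda>d. monom (rho_dir d)) ` set D :: 'k laurent set) = monom ` rho_dir ` set D"
    by (auto simp: image_iff)
  ultimately show ?thesis unfolding edge_ring_def AG_def image_Un by simp
qed

lemma edge_sub_aug: "(edge_ring S D :: 'k::field laurent set) \<subseteq> aug_edge_ring S D"
proof
  fix x :: "'k laurent" assume x: "x \<in> edge_ring S D"
  have "monom ` AG S D \<subseteq> (aug_edge_ring S D :: 'k laurent set)"
  proof
    fix y :: "'k laurent" assume "y \<in> monom ` AG S D"
    then obtain a where a: "a \<in> AG S D" "y = monom a" by auto
    show "y \<in> aug_edge_ring S D"
    proof (cases "a \<in> rho_dir ` set D")
      case True
      then obtain d where d: "d \<in> set D" "a = rho_dir d" by auto
      then obtain k where k: "k < length D" "D ! k = d" by (auto simp: in_set_conv_nth)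
      obtain i j where ij: "d = (i,j)" by (cases d)
      have m1': "(False, Inl (fst (D!k)), Inr k) \<in> aug_edges S D" using k(1) unfolding aug_edges_def by blast
      have m2': "(True, Inr k, Inl (snd (D!k))) \<in> aug_edges S D" using k(1) unfolding aug_edges_def by blast
      have m1: "(False, Inl i, Inr k) \<in> aug_edges S D" using m1' k ij by simp
      have m2: "(True, Inr k, Inl j) \<in> aug_edges S D" using m2' k ij by simp
      have g1: "monom (rho_signed (False, Inl i, Inr k)) \<in> (aug_edge_ring S D :: 'k laurent set)"
        unfolding aug_edge_ring_def using m1 by (auto intro: alg_gen.gen)
      have g2: "monom (rho_signed (True, Inr k, Inl j)) \<in> (aug_edge_ring S D :: 'k laurent set)"
        unfolding aug_edge_ring_def using m2 by (auto intro: alg_gen.gen)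
      have "rho_signed (False, Inl i, Inr k) + rho_signed (True, Inr k, Inl j) = a"
        using d ij by (simp add: rho_signed_def rho_dir_def algebra_simps)
      then have "y = monom (rho_signed (False, Inl i, Inr k)) * monom (rho_signed (True, Inr k, Inl j))"
        using a by (simp add: monom_mult)
      then show ?thesis using alg_gen.mult[OF g1[unfolded aug_edge_ring_def] g2[unfolded aug_edge_ring_def]]
        unfolding aug_edge_ring_def by simp
    next
      case False
      with a obtain b i j where "(b,i,j) \<in> S" "a = rho_signed (b, Inl i, Inl j)"
        unfolding AG_def by auto
      moreover then have "(b, Inl i, Inl j) \<in> aug_edges S D" unfolding aug_edges_def
        by (intro UnI1 image_eqI[where x="(b,i,j)"]) auto
      ultimately show ?thesis using a unfolding aug_edge_ring_def by (auto intro: alg_gen.gen)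
    qed
  qed
  then show "x \<in> aug_edge_ring S D" using x unfolding edge_ring_eq aug_edge_ring_def
    by (rule ag_sub)
qed

lemma px_var: "i \<in> {1..n} \<Longrightarrow> (monom (e (Inl i)) :: 'k::field laurent) \<in> poly_x n"
  unfolding poly_x_def by (auto intro: alg_gen.gen)

lemma px_mult: "a \<in> poly_x n \<Longrightarrow> b \<in> poly_x n \<Longrightarrow> a * b \<in> poly_x n"
  unfolding poly_x_def by (rule alg_gen.mult)

lemma px_one: "1 \<in> poly_x n"
  unfolding poly_x_def by (rule ag_one)

lemma edge_R:
  assumes h2: "\<forall>(b,i,j)\<in>S. i \<in> {1..n} \<and> j \<in> {1..n}"
    and h4: "\<forall>(i,j)\<in>set D. i \<in> {1..n} \<and> j \<in> {1..n} \<and> i \<noteq> j"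
    and p: "(p :: 'k::field laurent) \<in> edge_ring S D"
  shows "\<exists>a. monom a \<in> (poly_x n :: 'k laurent set) \<and> monom a * p \<in> poly_x n"
  using p unfolding edge_ring_def
proof (induct rule: alg_gen.induct)
  case (const c)
  have "monom 0 * Poly_Mapping.single 0 c \<in> (poly_x n :: 'k laurent set)"
    by (simp add: monom_0 poly_x_def alg_gen.const)
  then show ?case using px_one monom_0 by metis
next
  case (gen x)
  then show ?case
  proof
    assume "x \<in> (\<lambda>(b,i,j). monom (rho_signed (b, Inl i, Inl j))) ` S"
    then obtain b i j where bij: "(b,i,j) \<in> S" "x = monom (rho_signed (b, Inl i, Inl j))" by auto
    then have ij: "i \<in> {1..n}" "j \<in> {1..n}" using h2 by auto
    have pij: "monom (e (Inl i) + e (Inl j)) \<in> (poly_x n :: 'k laurent set)"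
      using px_mult[OF px_var[OF ij(1)] px_var[OF ij(2)]] by (simp add: monom_mult)
    show ?thesis
    proof (cases b)
      case True
      then have "monom 0 * x = monom (e (Inl i) + e (Inl j))" using bij by (simp add: rho_signed_def monom_0)
      then show ?thesis using pij px_one monom_0 by metis
    next
      case False
      then have "monom (e (Inl i) + e (Inl j)) * x = 1" using bij
        by (simp add: rho_signed_def monom_mult monom_0)
      then show ?thesis using pij px_one by metis
    qed
  next
    assume "x \<in> (\<lambda>d. monom (rho_dir d)) ` set D"
    then obtain i j where ij0: "(i,j) \<in> set D" "x = monom (rho_dir (i,j))" by auto
    then have ij: "i \<in> {1..n}" "j \<in> {1..n}" using h4 by auto
    have "monom (e (Inl i)) * x = monom (e (Inl j))" using ij0
      by (simp add: rho_dir_def monom_mult)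
    then show ?thesis using px_var[OF ij(1)] px_var[OF ij(2)] by metis
  qed
next
  case (add p q)
  then obtain a1 a2 where a: "monom a1 \<in> (poly_x n :: 'k laurent set)" "monom a1 * p \<in> poly_x n"
     "monom a2 \<in> (poly_x n :: 'k laurent set)" "monom a2 * q \<in> poly_x n" by blast
  have "monom (a1+a2) = (monom a1 * monom a2 :: 'k laurent)" by (simp add: monom_mult)
  moreover have "monom (a1+a2) * (p+q) = monom a2 * (monom a1 * p) + monom a1 * (monom a2 * q)"
    by (simp add: monom_mult[symmetric] algebra_simps)
  ultimately show ?case using a px_mult alg_gen.add unfolding poly_x_def by metis
next
  case (mult p q)
  then obtain a1 a2 where a: "monom a1 \<in> (poly_x n :: 'k laurent set)" "monom a1 * p \<in> poly_x n"
     "monom a2 \<in> (poly_x n :: 'k laurent set)" "monom a2 * q \<in> poly_x n" by blast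
  have "monom (a1+a2) = (monom a1 * monom a2 :: 'k laurent)" by (simp add: monom_mult)
  moreover have "monom (a1+a2) * (p*q) = (monom a1 * p) * (monom a2 * q)"
    by (simp add: monom_mult[symmetric] algebra_simps)
  ultimately show ?case using a px_mult by metis
qed


lemma px_tz: "(r :: 'k::field laurent) \<in> poly_x n \<Longrightarrow> a \<in> Poly_Mapping.keys r \<Longrightarrow> Poly_Mapping.lookup a (Inr k) = 0"
proof -
  assume r: "r \<in> poly_x n" and a: "a \<in> Poly_Mapping.keys r"
  have "poly_x n = (alg_gen (monom ` (\<lambda>i. e (Inl i)) ` {1..n}) :: 'k laurent set)"
    unfolding poly_x_def image_image ..
  with r have "a \<in> mon ((\<lambda>i. e (Inl i)) ` {1..n})" using keys_of a by blast
  then show ?thesis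
    by (induct rule: mon.induct) (auto simp: e_def lookup_single' lookup_add)
qed

definition restr :: "(expo \<Rightarrow> bool) \<Rightarrow> 'k::field laurent \<Rightarrow> 'k laurent" where
  "restr P r = (\<Sum>a\<in>{a\<in>Poly_Mapping.keys r. P a}. Poly_Mapping.single a (Poly_Mapping.lookup r a))"

lemma lookup_restr: "Poly_Mapping.lookup (restr P r) x = (if P x then Poly_Mapping.lookup r x else 0)"
proof -
  have "Poly_Mapping.lookup (restr P r) x = (\<Sum>a\<in>{a\<in>Poly_Mapping.keys r. P a}. if a = x then Poly_Mapping.lookup r a else 0)"
    by (simp add: restr_def lookup_sum lookup_single')
  also have "\<dots> = (if P x then Poly_Mapping.lookup r x else 0)"
    by (simp add: in_keys_iff)
  finally show ?thesis .
qed

lemma restr_add: "restr P (r + s) = restr P r + restr P s"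
  by (rule poly_mapping_eqI) (simp add: lookup_restr lookup_add)

lemma restr_split: "r = restr P r + restr (\<lambda>a. \<not> P a) r"
  by (rule poly_mapping_eqI) (simp add: lookup_restr lookup_add)

lemma restr_all: "(\<forall>a\<in>Poly_Mapping.keys r. P a) \<Longrightarrow> restr P r = r"
  by (rule poly_mapping_eqI) (auto simp: lookup_restr in_keys_iff)

lemma restr_none: "(\<forall>a\<in>Poly_Mapping.keys r. \<not> P a) \<Longrightarrow> restr P r = 0"
  by (rule poly_mapping_eqI) (auto simp: lookup_restr in_keys_iff)

lemma keys_restr: "a \<in> Poly_Mapping.keys (restr P r) \<Longrightarrow> P a \<and> a \<in> Poly_Mapping.keys r"
  by (auto simp: in_keys_iff lookup_restr split: if_splits)

definition Pd :: "expo \<Rightarrow> expo \<Rightarrow> bool" where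
  "Pd a0 a = (\<forall>k. Poly_Mapping.lookup a (Inr k) = Poly_Mapping.lookup a0 (Inr k))"

lemma comp_mult:
  assumes tz: "\<And>b k. b \<in> Poly_Mapping.keys s \<Longrightarrow> Poly_Mapping.lookup b (Inr k) = 0"
  shows "restr (Pd a0) (r * (s :: 'k::field laurent)) = restr (Pd a0) r * s"
proof -
  let ?P = "Pd a0"
  have key: "?P (a + b) = ?P a" if "b \<in> Poly_Mapping.keys s" for a b
    using tz[OF that] by (simp add: Pd_def lookup_add)
  define r1 where "r1 = restr ?P r"
  define r2 where "r2 = restr (\<lambda>a. \<not> ?P a) r"
  have r: "r = r1 + r2" unfolding r1_def r2_def by (rule restr_split)
  have 1: "restr ?P (r1 * s) = r1 * s"
  proof (rule restr_all, rule ballI)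
    fix x assume "x \<in> Poly_Mapping.keys (r1 * s)"
    then obtain a b where "x = a + b" "a \<in> Poly_Mapping.keys r1" "b \<in> Poly_Mapping.keys s"
      using keys_mult[of r1 s] by blast
    then show "?P x" using key keys_restr unfolding r1_def by metis
  qed
  have 2: "restr ?P (r2 * s) = 0"
  proof (rule restr_none, rule ballI)
    fix x assume "x \<in> Poly_Mapping.keys (r2 * s)"
    then obtain a b where "x = a + b" "a \<in> Poly_Mapping.keys r2" "b \<in> Poly_Mapping.keys s"
      using keys_mult[of r2 s] by blast
    then show "\<not> ?P x" using key keys_restr unfolding r2_def by metis
  qed
  have "restr ?P (r * s) = restr ?P (r1 * s) + restr ?P (r2 * s)"
    unfolding r by (simp add: distrib_right restr_add)
  also have "\<dots> = r1 * s" using 1 2 by simp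
  finally show ?thesis unfolding r1_def .
qed

definition psi :: "(nat \<times> nat) list \<Rightarrow> expo \<Rightarrow> expo" where
  "psi D a = (\<Sum>k<length D. Poly_Mapping.single (Inr k) (Poly_Mapping.lookup a (Inr k))
       + Poly_Mapping.single (Inl (snd (D!k))) (Poly_Mapping.lookup a (Inr k)))"

lemma psi_add: "psi D (a + b) = psi D a + psi D b"
  by (simp add: psi_def lookup_add single_add sum.distrib algebra_simps)

lemma psi_0: "psi D 0 = 0"
  by (simp add: psi_def)

lemma psi_uminus: "psi D (- a) = - psi D a"
proof -
  have "psi D (a + - a) = psi D a + psi D (-a)" by (rule psi_add)
  then show ?thesis by (simp add: psi_0 eq_neg_iff_add_eq_0 add.commute)
qed

lemma psi_diff: "psi D (a - b) = psi D a - psi D b"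
  using psi_add[of D a "- b"] psi_uminus[of D b] by simp

lemma psi_cong: "Pd b a \<Longrightarrow> psi D a = psi D b"
  by (simp add: psi_def Pd_def)

lemma psi_Inl: "psi D (e (Inl i)) = 0"
  by (simp add: psi_def e_def lookup_single')

lemma psi_Inr: "k < length D \<Longrightarrow> psi D (e (Inr k)) = e (Inr k) + e (Inl (snd (D!k)))"
proof -
  assume k: "k < length D"
  have "psi D (e (Inr k)) = (\<Sum>k'<length D. if k = k' then e (Inr k) + e (Inl (snd (D!k))) else 0)"
    unfolding psi_def by (rule sum.cong) (auto simp: e_def lookup_single')
  also have "\<dots> = e (Inr k) + e (Inl (snd (D!k)))" using k by simp
  finally show ?thesis .
qed

lemma phi_mon:
  assumes "a \<in> mon (rho_signed ` aug_edges S D)"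
  shows "a - psi D a \<in> mon (AG S D)"
  using assms
proof (induct rule: mon.induct)
  case mzero then show ?case by (simp add: psi_0 mon.mzero)
next
  case (madd a b)
  have eq: "(a + b) - psi D (a + b) = (a - psi D a) + (b - psi D b)" by (simp add: psi_add)
  show ?case unfolding eq by (rule mon.madd[OF madd(2) madd(4)])
next
  case (mgen a)
  then obtain x where x: "x \<in> aug_edges S D" "a = rho_signed x" by auto
  from x(1) consider (s) b i j where "(b,i,j) \<in> S" "x = (b, Inl i, Inl j)"
    | (m) k where "k < length D" "x = (False, Inl (fst (D ! k)), Inr k)"
    | (p) k where "k < length D" "x = (True, Inr k, Inl (snd (D ! k)))"
    unfolding aug_edges_def by (elim UnE imageE CollectE exE conjE) auto
  then show ?case
  proof cases
    case s
    have "psi D a = 0" using s x by (simp add: rho_signed_def psi_add psi_uminus psi_diff psi_Inl)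
    moreover have "a \<in> AG S D" unfolding AG_def using s x
      by (intro UnI1 image_eqI[where x="(b,i,j)"]) auto
    ultimately show ?thesis by (simp add: mon.mgen)
  next
    case m
    have "a - psi D a = rho_dir (D ! k)" using m x
      by (simp add: rho_signed_def psi_add psi_uminus psi_diff psi_Inl psi_Inr rho_dir_def split: prod.splits)
    moreover have "rho_dir (D ! k) \<in> AG S D" unfolding AG_def using m by auto
    ultimately show ?thesis by (simp add: mon.mgen)
  next
    case p
    have "a - psi D a = 0" using p x
      by (simp add: rho_signed_def psi_add psi_diff psi_Inl psi_Inr)
    then show ?thesis by (simp add: mon.mzero)
  qed
qed


lemma shift_in:
  assumes "\<And>a. a \<in> Poly_Mapping.keys r \<Longrightarrow> c + a \<in> mon (AG S D)"
  shows "monom c * (r :: 'k::field laurent) \<in> edge_ring S D"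
proof -
  have "Poly_Mapping.keys (monom c * r) \<subseteq> mon (AG S D)"
  proof
    fix x assume "x \<in> Poly_Mapping.keys (monom c * r)"
    then obtain a b where "x = a + b" "a \<in> Poly_Mapping.keys (monom c :: 'k laurent)" "b \<in> Poly_Mapping.keys r"
      using keys_mult[of "monom c" r] by blast
    then show "x \<in> mon (AG S D)" using assms by (simp add: monom_def)
  qed
  then show ?thesis unfolding edge_ring_eq by (rule keys_in)
qed

theorem mainTheorem7:
  fixes S :: "(bool \<times> nat \<times> nat) set"
    and D :: "(nat \<times> nat) list"
    and n :: nat
    and f g :: "'k::field laurent"
  assumes "finite S"
    and "\<forall>(b,i,j)\<in>S. i \<in> {1..n} \<and> j \<in> {1..n}"
    and "distinct D"
    and "\<forall>(i,j)\<in>set D. i \<in> {1..n} \<and> j \<in> {1..n} \<and> i \<noteq> j"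
    and "\<forall>v. Poly_Mapping.lookup f v \<noteq> 0 \<longrightarrow>
           (\<forall>w. Poly_Mapping.lookup v w \<noteq> 0 \<longrightarrow> w \<in> Inl ` {1..n} \<union> Inr ` {..<length D})"
    and "\<forall>v. Poly_Mapping.lookup g v \<noteq> 0 \<longrightarrow>
           (\<forall>w. Poly_Mapping.lookup v w \<noteq> 0 \<longrightarrow> w \<in> Inl ` {1..n} \<union> Inr ` {..<length D})"
    and "g \<noteq> 0"
  shows "(in_frac (aug_edge_ring S D) f g \<and> in_frac (poly_x n) f g)
           \<longleftrightarrow> in_frac (edge_ring S D) f g"
proof
  assume "in_frac (edge_ring S D) f g"
  then obtain p q where pq: "p \<in> edge_ring S D" "q \<in> edge_ring S D" "q \<noteq> 0" "f * q = p * g"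
    unfolding in_frac_def by blast
  have A: "in_frac (aug_edge_ring S D) f g"
    unfolding in_frac_def using pq edge_sub_aug by blast
  obtain a1 where a1: "monom a1 \<in> (poly_x n :: 'k laurent set)" "monom a1 * p \<in> poly_x n"
    using edge_R[OF assms(2) assms(4) pq(1)] by blast
  obtain a2 where a2: "monom a2 \<in> (poly_x n :: 'k laurent set)" "monom a2 * q \<in> poly_x n"
    using edge_R[OF assms(2) assms(4) pq(2)] by blast
  have P: "monom a2 * (monom a1 * p) \<in> poly_x n" using a1 a2 px_mult by blast
  have Q: "monom a1 * (monom a2 * q) \<in> poly_x n" using a1 a2 px_mult by blast
  have Qnz: "monom a1 * (monom a2 * q) \<noteq> 0" using pq(3) by (simp add: monom_nz)
  have "f * (monom a1 * (monom a2 * q)) = monom a1 * monom a2 * (f * q)" by (simp add: ac_simps)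
  also have "\<dots> = monom a2 * (monom a1 * p) * g" using pq(4) by (simp add: ac_simps)
  finally have "in_frac (poly_x n) f g" unfolding in_frac_def using P Q Qnz by blast
  with A show "in_frac (aug_edge_ring S D) f g \<and> in_frac (poly_x n) f g" by blast
next
  assume "in_frac (aug_edge_ring S D) f g \<and> in_frac (poly_x n) f g"
  then obtain p q p2 q2 where pq: "p \<in> aug_edge_ring S D" "q \<in> aug_edge_ring S D" "q \<noteq> 0" "f * q = p * g"
    and pq2: "p2 \<in> poly_x n" "q2 \<in> poly_x n" "q2 \<noteq> 0" "f * q2 = p2 * g"
    unfolding in_frac_def by blast
  have "g * (p * q2) = (f * q) * q2" using pq(4) by (simp add: ac_simps)
  also have "\<dots> = (f * q2) * q" by (simp add: ac_simps)
  also have "\<dots> = g * (p2 * q)" using pq2(4) by (simp add: ac_simps)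
  finally have e1: "p * q2 = p2 * q" using assms(7) by simp
  obtain a0 where a0: "a0 \<in> Poly_Mapping.keys q" using pq(3) by (metis all_not_in_conv keys_eq_empty)
  define pd where "pd = restr (Pd a0) p"
  define qd where "qd = restr (Pd a0) q"
  have tz2: "\<And>b k. b \<in> Poly_Mapping.keys q2 \<Longrightarrow> Poly_Mapping.lookup b (Inr k) = 0"
    using px_tz[OF pq2(2)] by blast
  have tzp2: "\<And>b k. b \<in> Poly_Mapping.keys p2 \<Longrightarrow> Poly_Mapping.lookup b (Inr k) = 0"
    using px_tz[OF pq2(1)] by blast
  have "pd * q2 = restr (Pd a0) (p * q2)" unfolding pd_def by (rule comp_mult[symmetric, OF tz2])
  also have "\<dots> = restr (Pd a0) (q * p2)" using e1 by (simp add: ac_simps)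
  also have "\<dots> = qd * p2" unfolding qd_def by (rule comp_mult[OF tzp2])
  finally have e2: "pd * q2 = qd * p2" .
  have "Poly_Mapping.lookup qd a0 = Poly_Mapping.lookup q a0"
    unfolding qd_def by (simp add: lookup_restr Pd_def)
  then have qdnz: "qd \<noteq> 0" using a0 by (auto simp: in_keys_iff)
  have "q2 * (f * qd) = (f * q2) * qd" by (simp add: ac_simps)
  also have "\<dots> = g * (qd * p2)" using pq2(4) by (simp add: ac_simps)
  also have "\<dots> = q2 * (pd * g)" using e2[symmetric] by (simp add: ac_simps)
  finally have e3: "f * qd = pd * g" using pq2(3) by simp
  let ?c = "- psi D a0"
  have monA: "aug_edge_ring S D = (alg_gen (monom ` (rho_signed ` aug_edges S D)) :: 'k laurent set)"
    unfolding aug_edge_ring_def ..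
  have shift: "?c + a \<in> mon (AG S D)" if "a \<in> Poly_Mapping.keys (restr (Pd a0) r)" "r \<in> aug_edge_ring S D"
    for a and r :: "'k laurent"
  proof -
    from keys_restr[OF that(1)] have "Pd a0 a" "a \<in> Poly_Mapping.keys r" by auto
    then have "a \<in> mon (rho_signed ` aug_edges S D)" using keys_of that(2) monA by blast
    then have "a - psi D a \<in> mon (AG S D)" by (rule phi_mon)
    moreover have "psi D a = psi D a0" using \<open>Pd a0 a\<close> by (rule psi_cong)
    ultimately show ?thesis by (simp add: algebra_simps)
  qed
  have P3: "monom ?c * pd \<in> edge_ring S D" unfolding pd_def
    by (rule shift_in) (rule shift[OF _ pq(1)])
  have Q3: "monom ?c * qd \<in> edge_ring S D" unfolding qd_def
    by (rule shift_in) (rule shift[OF _ pq(2)])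
  have Q3nz: "monom ?c * qd \<noteq> 0" using qdnz by (simp add: monom_nz)
  have "f * (monom ?c * qd) = monom ?c * pd * g" using e3 by (simp add: ac_simps)
  then show "in_frac (edge_ring S D) f g" unfolding in_frac_def using P3 Q3 Q3nz by blast
qed

end
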